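(* In the cell FDE setting described in the context, assume (H1), (H2), (H3), and: (H8) there exist $\delta>0$ and $z^*\ge0$ with $q(z)\le-\delta$ for all $z\ge z^*$; (H9) for every $K>0$ there is $L=L(K)$ such that $j(\varphi,\psi)\ge K$ whenever $(\varphi,\psi)\in U_+$ and $\min_{[-h,0]}\varphi\ge L$. Then there exists $K_2$ such that for every $\phi\in X_+$ there is $t_m=t_m(\phi)$ with $w^\phi(t)\le K_2$ for all $t\ge t_m$.
   Context: Let $h>0$, $R_-<0$, $I:=(R_-,\infty)$. $\|\phi\|_0:=\max_{\theta\in[-h,0]}|\phi(\theta)|$, $\|\phi\|_1:=\|\phi\|_0+\|\phi'\|_0$; $x_t(s):=x(t+s)$, $s\in[-h,0]$. Let $U:=C^1([-h,0],\mathbb R)\times C^1([-h,0],I)$, $U_+:=C^1([-h,0],[0,\infty)^2)$, $q:I\to\mathbb R$, $j:U\to\mathbb R$, $\mu\ge0$. Cell FDE: $w'(t)=q(v(t))w(t)$, $v'(t)=j(w_t,v_t)-\mu v(t)$, $t>0$, $(w_0,v_0)=(\varphi,\psi)$. $F(\varphi,\psi):=(q(\psi(0))\varphi(0),j(\varphi,\psi)-\mu\psi(0))$, $X:=\{\phi\in U:\phi'(0)=F(\phi)\}$, $X_+:=X\cap U_+$. Solutions are $C^1$ maps $x=(w,v)$ on $[-h,t_* )$ with $x_0=\phi$, $x_t\in U$, satisfying the equations on $(0,t_* )$. (S): $f$ is $C^1$, each $Df(\phi)$ extends to a linear map on $C([-h,0],\mathbb R^n)$ and $(\phi,\chi)\mapsto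 D_ef(\phi)\chi$ is continuous. (sLb) on $\mathcal O_+$: for each $\|\cdot\|_1$-bounded $B\subset\mathcal O_+$ there is $L_B$ with $|f(\phi)-f(\chi)|\le L_B\|\phi-\chi\|_0$ on $B$. (H1): $j$ satisfies (S) on $U$, (sLb) on $U_+$, $j\ge0$ on $U_+$, and $j(B_1\times B_2)$ is bounded whenever $B_1\times B_2\subset U_+$ with $B_1$ bounded. (H2): $q$ bounded and $C^1$. (H3): $X_+\neq\emptyset$. Under (H1)-(H3) each $\phi\in X_+$ has a unique solution $(w^\phi,v^\phi)$ on $[-h,\infty)$ with segments in $X_+$. *)

theory Defs
  imports "HOL-Analysis.Analysis"
begin

(* Functions on [-h,0] are represented extensionally as maps real => 'a that vanish off [-h,0]. *)

definition pf :: "(real \<Rightarrow> real) \<Rightarrow> (real \<Rightarrow> real) \<Rightarrow> real \<Rightarrow> real \<times> real" where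
  "pf \<phi> \<psi> = (\<lambda>s. (\<phi> s, \<psi> s))"

definition nrm0 :: "real \<Rightarrow> (real \<Rightarrow> 'a::real_normed_vector) \<Rightarrow> real" where
  "nrm0 h f = (SUP s\<in>{-h..0}. norm (f s))"

definition dr :: "real \<Rightarrow> (real \<Rightarrow> 'a::real_normed_vector) \<Rightarrow> real \<Rightarrow> 'a" where
  "dr h f s = vector_derivative f (at s within {-h..0})"

definition nrm1 :: "real \<Rightarrow> (real \<Rightarrow> 'a::real_normed_vector) \<Rightarrow> real" where
  "nrm1 h f = nrm0 h f + nrm0 h (dr h f)"

definition isC0 :: "real \<Rightarrow> (real \<Rightarrow> 'a::real_normed_vector) \<Rightarrow> bool" where
  "isC0 h f \<longleftrightarrow> continuous_on {-h..0} f \<and> (\<forall>s. s \<notin> {-h..0} \<longrightarrow> f s = 0)"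

definition isC1 :: "real \<Rightarrow> (real \<Rightarrow> 'a::real_normed_vector) \<Rightarrow> bool" where
  "isC1 h f \<longleftrightarrow> (\<forall>s\<in>{-h..0}. (f has_vector_derivative dr h f s) (at s within {-h..0}))
      \<and> continuous_on {-h..0} (dr h f) \<and> (\<forall>s. s \<notin> {-h..0} \<longrightarrow> f s = 0)"

definition UU :: "real \<Rightarrow> real \<Rightarrow> ((real \<Rightarrow> real) \<times> (real \<Rightarrow> real)) set" where
  "UU h Rm = {(\<phi>, \<psi>). isC1 h \<phi> \<and> isC1 h \<psi> \<and> (\<forall>s\<in>{-h..0}. Rm < \<psi> s)}"

definition Uplus :: "real \<Rightarrow> ((real \<Rightarrow> real) \<times> (real \<Rightarrow> real)) set" where
  "Uplus h = {(\<phi>, \<psi>). isC1 h \<phi> \<and> isC1 h \<psi> \<and> (\<forall>s\<in>{-h..0}. 0 \<le> \<phi> s \<and> 0 \<le> \<psi> s)}"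

definition FF :: "(real \<Rightarrow> real) \<Rightarrow> ((real \<Rightarrow> real) \<Rightarrow> (real \<Rightarrow> real) \<Rightarrow> real) \<Rightarrow> real
    \<Rightarrow> (real \<Rightarrow> real) \<Rightarrow> (real \<Rightarrow> real) \<Rightarrow> real \<times> real" where
  "FF q j \<mu> \<phi> \<psi> = (q (\<psi> 0) * \<phi> 0, j \<phi> \<psi> - \<mu> * \<psi> 0)"

definition XX where
  "XX h Rm q j \<mu> = {(\<phi>, \<psi>) \<in> UU h Rm. (dr h \<phi> 0, dr h \<psi> 0) = FF q j \<mu> \<phi> \<psi>}"

definition Xplus where
  "Xplus h Rm q j \<mu> = XX h Rm q j \<mu> \<inter> Uplus h"

definition seg :: "real \<Rightarrow> (real \<Rightarrow> real) \<Rightarrow> real \<Rightarrow> real \<Rightarrow> real" where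
  "seg h x t = (\<lambda>s. if s \<in> {-h..0} then x (t + s) else 0)"

text \<open>Condition (S) for j on U, with D_e j(p) represented by De p (defined on C pairs).\<close>
definition condS where
  "condS h Rm j \<longleftrightarrow> (\<exists>De :: (real \<Rightarrow> real) \<Rightarrow> (real \<Rightarrow> real) \<Rightarrow> (real \<Rightarrow> real) \<Rightarrow> (real \<Rightarrow> real) \<Rightarrow> real.
     (\<forall>(\<phi>,\<psi>)\<in>UU h Rm. \<forall>\<xi>1 \<zeta>1 \<xi>2 \<zeta>2 a b. isC0 h \<xi>1 \<and> isC0 h \<zeta>1 \<and> isC0 h \<xi>2 \<and> isC0 h \<zeta>2 \<longrightarrow>
        De \<phi> \<psi> (\<lambda>s. a * \<xi>1 s + b * \<xi>2 s) (\<lambda>s. a * \<zeta>1 s + b * \<zeta>2 s)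
          = a * De \<phi> \<psi> \<xi>1 \<zeta>1 + b * De \<phi> \<psi> \<xi>2 \<zeta>2)
   \<and> (\<forall>(\<phi>,\<psi>)\<in>UU h Rm. \<forall>\<epsilon>>0. \<exists>\<eta>>0. \<forall>(\<phi>',\<psi>')\<in>UU h Rm.
        nrm1 h (pf (\<lambda>s. \<phi>' s - \<phi> s) (\<lambda>s. \<psi>' s - \<psi> s)) < \<eta> \<longrightarrow>
        \<bar>j \<phi>' \<psi>' - j \<phi> \<psi> - De \<phi> \<psi> (\<lambda>s. \<phi>' s - \<phi> s) (\<lambda>s. \<psi>' s - \<psi> s)\<bar>
          \<le> \<epsilon> * nrm1 h (pf (\<lambda>s. \<phi>' s - \<phi> s) (\<lambda>s. \<psi>' s - \<psi> s)))
   \<and> (\<forall>(\<phi>,\<psi>)\<in>UU h Rm. \<forall>\<epsilon>>0. \<exists>\<eta>>0. \<forall>(\<phi>',\<psi>')\<in>UU h Rm.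
        nrm1 h (pf (\<lambda>s. \<phi>' s - \<phi> s) (\<lambda>s. \<psi>' s - \<psi> s)) < \<eta> \<longrightarrow>
        (\<forall>\<xi> \<zeta>. isC1 h \<xi> \<and> isC1 h \<zeta> \<longrightarrow>
           \<bar>De \<phi>' \<psi>' \<xi> \<zeta> - De \<phi> \<psi> \<xi> \<zeta>\<bar> \<le> \<epsilon> * nrm1 h (pf \<xi> \<zeta>)))
   \<and> (\<forall>(\<phi>,\<psi>)\<in>UU h Rm. \<forall>\<xi> \<zeta>. isC0 h \<xi> \<and> isC0 h \<zeta> \<longrightarrow>
        (\<forall>\<epsilon>>0. \<exists>\<eta>>0. \<forall>(\<phi>',\<psi>')\<in>UU h Rm. \<forall>\<xi>' \<zeta>'. isC0 h \<xi>' \<and> isC0 h \<zeta>' \<and>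
           nrm1 h (pf (\<lambda>s. \<phi>' s - \<phi> s) (\<lambda>s. \<psi>' s - \<psi> s)) < \<eta> \<and>
           nrm0 h (pf (\<lambda>s. \<xi>' s - \<xi> s) (\<lambda>s. \<zeta>' s - \<zeta> s)) < \<eta> \<longrightarrow>
           \<bar>De \<phi>' \<psi>' \<xi>' \<zeta>' - De \<phi> \<psi> \<xi> \<zeta>\<bar> < \<epsilon>)))"

definition condsLb where
  "condsLb h j \<longleftrightarrow> (\<forall>B \<subseteq> Uplus h. (\<exists>M. \<forall>(\<phi>,\<psi>)\<in>B. nrm1 h (pf \<phi> \<psi>) \<le> M) \<longrightarrow>
     (\<exists>L. \<forall>(\<phi>,\<psi>)\<in>B. \<forall>(\<phi>',\<psi>')\<in>B.
        \<bar>j \<phi> \<psi> - j \<phi>' \<psi>'\<bar> \<le> L * nrm0 h (pf (\<lambda>s. \<phi> s - \<phi>' s) (\<lambda>s. \<psi> s - \<psi>' s))))"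

definition H1 where
  "H1 h Rm j \<longleftrightarrow> condS h Rm j \<and> condsLb h j \<and> (\<forall>(\<phi>,\<psi>)\<in>Uplus h. 0 \<le> j \<phi> \<psi>)
     \<and> (\<forall>B1 B2. B1 \<times> B2 \<subseteq> Uplus h \<and> (\<exists>M. \<forall>\<phi>\<in>B1. nrm1 h \<phi> \<le> M) \<longrightarrow>
          bounded ((\<lambda>(\<phi>,\<psi>). j \<phi> \<psi>) ` (B1 \<times> B2)))"

definition H2 where
  "H2 Rm q \<longleftrightarrow> (\<exists>M. \<forall>z\<in>{Rm<..}. \<bar>q z\<bar> \<le> M)
     \<and> (\<exists>q'. continuous_on {Rm<..} q' \<and> (\<forall>z\<in>{Rm<..}. (q has_real_derivative q' z) (at z)))"

definition is_solution where
  "is_solution h Rm q j \<mu> \<phi> \<psi> w v \<longleftrightarrow>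
     (\<exists>w'. continuous_on {-h..} w' \<and> (\<forall>t\<ge>-h. (w has_real_derivative w' t) (at t within {-h..})))
   \<and> (\<exists>v'. continuous_on {-h..} v' \<and> (\<forall>t\<ge>-h. (v has_real_derivative v' t) (at t within {-h..})))
   \<and> seg h w 0 = \<phi> \<and> seg h v 0 = \<psi>
   \<and> (\<forall>t\<ge>0. (seg h w t, seg h v t) \<in> UU h Rm)
   \<and> (\<forall>t>0. (w has_real_derivative q (v t) * w t) (at t)
          \<and> (v has_real_derivative j (seg h w t) (seg h v t) - \<mu> * v t) (at t))"

end

theory Submission imports Defs begin

lemma mvt_gen:
  fixes f f' :: "real \<Rightarrow> real"
  assumes "a < b" "continuous_on {a..b} f"
    "\<And>t. a < t \<Longrightarrow> t < b \<Longrightarrow> (f has_real_derivative f' t) (at t)"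
  shows "\<exists>z. a < z \<and> z < b \<and> f b - f a = (b-a) * f' z"
proof -
  have "\<And>x. a < x \<Longrightarrow> x < b \<Longrightarrow> f differentiable (at x)"
    using assms(3) real_differentiable_def by blast
  from MVT[OF assms(1,2) this] obtain l z where
    z: "a < z" "z < b" "DERIV f z :> l" "f b - f a = (b - a) * l" by blast
  have "l = f' z" using DERIV_unique[OF z(3) assms(3)[OF z(1,2)]] .
  with z show ?thesis by blast
qed

lemma lin_lower:
  fixes f f' :: "real \<Rightarrow> real"
  assumes "a \<le> b" "continuous_on {a..b} f"
    "\<And>t. a < t \<Longrightarrow> t < b \<Longrightarrow> (f has_real_derivative f' t) (at t)"
    "\<And>t. a < t \<Longrightarrow> t < b \<Longrightarrow> c \<le> f' t"
  shows "f a + c*(b-a) \<le> f b"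
proof (cases "a = b")
  case False
  then have "a < b" using assms(1) by simp
  from mvt_gen[OF this assms(2,3)] obtain z where z: "a < z" "z < b" "f b - f a = (b-a) * f' z" by blast
  have "c * (b-a) \<le> (b-a) * f' z" using assms(4)[OF z(1,2)] \<open>a<b\<close>
    by (simp add: mult.commute mult_right_mono)
  then show ?thesis using z by linarith
qed simp

lemma lin_upper:
  fixes f f' :: "real \<Rightarrow> real"
  assumes "a \<le> b" "continuous_on {a..b} f"
    "\<And>t. a < t \<Longrightarrow> t < b \<Longrightarrow> (f has_real_derivative f' t) (at t)"
    "\<And>t. a < t \<Longrightarrow> t < b \<Longrightarrow> f' t \<le> c"
  shows "f b \<le> f a + c*(b-a)"
proof (cases "a = b")
  case False
  then have "a < b" using assms(1) by simp
  from mvt_gen[OF this assms(2,3)] obtain z where z: "a < z" "z < b" "f b - f a = (b-a) * f' z" by blast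
  have "(b-a) * f' z \<le> c * (b-a)" using assms(4)[OF z(1,2)] \<open>a<b\<close>
    by (simp add: mult.commute mult_right_mono)
  then show ?thesis using z by linarith
qed simp

lemma exp_growth:
  fixes f g :: "real \<Rightarrow> real"
  assumes "a \<le> b" "continuous_on {a..b} f"
    "\<And>t. a < t \<Longrightarrow> t < b \<Longrightarrow> (f has_real_derivative g t * f t) (at t)"
    "\<And>t. a < t \<Longrightarrow> t < b \<Longrightarrow> g t \<le> M \<and> 0 \<le> f t"
  shows "f b \<le> f a * exp (M*(b-a))"
proof -
  define F where "F t = f t * exp (- M * t)" for t
  have c: "continuous_on {a..b} F" unfolding F_def
    by (intro continuous_intros assms(2))
  have d: "(F has_real_derivative (g t - M) * f t * exp (- M * t)) (at t)" if "a < t" "t < b" for t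
    unfolding F_def
    by (rule derivative_eq_intros assms(3)[OF that] refl | simp add: algebra_simps)+
  have "F b \<le> F a + 0 * (b-a)"
    apply (rule lin_upper[OF assms(1) c d])
     apply assumption+
    using assms(4) by (simp add: mult_nonpos_nonneg)
  then have "f b * exp (- M * b) \<le> f a * exp (- M * a)" by (simp add: F_def)
  then have "f b * exp (- M * b) * exp (M * b) \<le> f a * exp (- M * a) * exp (M*b)"
    by (simp add: mult_right_mono)
  then show ?thesis by (simp add: mult.assoc exp_add[symmetric] algebra_simps)
qed

lemma persist:
  fixes f f' :: "real \<Rightarrow> real"
  assumes "a \<le> b" "continuous_on {a..b} f"
    "\<And>t. a < t \<Longrightarrow> t < b \<Longrightarrow> (f has_real_derivative f' t) (at t)"
    "c \<le> f a"
    "\<And>t. a < t \<Longrightarrow> t < b \<Longrightarrow> f t < c \<Longrightarrow> 0 < f' t"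
  shows "c \<le> f b"
proof (rule ccontr)
  assume nb: "\<not> c \<le> f b"
  define S where "S = {a..b} \<inter> f -` {c..}"
  have cS: "closed S" unfolding S_def by (rule continuous_closed_preimage[OF assms(2)]) auto
  have ne: "S \<noteq> {}" using assms(1,4) unfolding S_def by auto
  have bdd: "bdd_above S" unfolding S_def by (rule bdd_aboveI[of _ b]) auto
  define r where "r = Sup S"
  have rS: "r \<in> S" using closed_contains_Sup[OF ne bdd cS] r_def by simp
  then have r: "a \<le> r" "r \<le> b" "c \<le> f r" unfolding S_def by auto
  have "r \<noteq> b" using r nb by auto
  with r have rb: "r < b" by simp
  have above: "f t < c" if "r < t" "t \<le> b" for t
  proof (rule ccontr)
    assume "\<not> f t < c"
    then have "t \<in> S" using that r unfolding S_def by auto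
    then have "t \<le> r" unfolding r_def using bdd by (simp add: cSup_upper)
    with that show False by simp
  qed
  have c2: "continuous_on {r..b} f" using r by (intro continuous_on_subset[OF assms(2)]) auto
  from mvt_gen[OF rb c2, of f'] obtain z where z: "r < z" "z < b" "f b - f r = (b-r) * f' z"
    using assms(3) r by force
  have "0 < f' z" using assms(5)[of z] z r above[of z] by auto
  then have "0 < (b - r) * f' z" using rb by simp
  with z r nb show False by linarith
qed

lemma last_below:
  fixes w :: "real \<Rightarrow> real"
  assumes "s \<le> t" "continuous_on {s..t} w" "w s \<le> A" "A < w t"
  shows "\<exists>a. s \<le> a \<and> a < t \<and> w a \<le> A \<and> (\<forall>r. a < r \<and> r \<le> t \<longrightarrow> A < w r)"
proof -
  define S where "S = {s..t} \<inter> w -` {..A}"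
  have cS: "closed S" unfolding S_def by (rule continuous_closed_preimage[OF assms(2)]) auto
  have ne: "S \<noteq> {}" using assms(1,3) unfolding S_def by auto
  have bdd: "bdd_above S" unfolding S_def by (rule bdd_aboveI[of _ t]) auto
  define a where "a = Sup S"
  have "a \<in> S" using closed_contains_Sup[OF ne bdd cS] a_def by simp
  then have a: "s \<le> a" "a \<le> t" "w a \<le> A" unfolding S_def by auto
  have "a \<noteq> t" using a assms(4) by auto
  moreover have "A < w r" if "a < r" "r \<le> t" for r
  proof (rule ccontr)
    assume "\<not> A < w r"
    then have "r \<in> S" using that a unfolding S_def by auto
    then have "r \<le> a" unfolding a_def using bdd by (simp add: cSup_upper)
    with that show False by simp
  qed
  ultimately show ?thesis using a by force
qed

theorem lemma16:
  fixes h Rm \<mu> :: real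
    and q :: "real \<Rightarrow> real"
    and j :: "(real \<Rightarrow> real) \<Rightarrow> (real \<Rightarrow> real) \<Rightarrow> real"
  assumes "0 < h" and "Rm < 0" and "0 \<le> \<mu>"
    and "H1 h Rm j" and "H2 Rm q" and "Xplus h Rm q j \<mu> \<noteq> {}"
    and H8: "\<exists>\<delta>>0. \<exists>zs\<ge>0. \<forall>z\<ge>zs. q z \<le> - \<delta>"
    and H9: "\<forall>K>0. \<exists>L. \<forall>(\<phi>,\<psi>)\<in>Uplus h. (\<forall>s\<in>{-h..0}. L \<le> \<phi> s) \<longrightarrow> K \<le> j \<phi> \<psi>"
  shows "\<exists>K2. \<forall>(\<phi>,\<psi>)\<in>Xplus h Rm q j \<mu>. \<forall>w v.
           is_solution h Rm q j \<mu> \<phi> \<psi> w v \<and> (\<forall>t\<ge>0. (seg h w t, seg h v t) \<in> Xplus h Rm q j \<mu>)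
           \<longrightarrow> (\<exists>tm. \<forall>t\<ge>tm. w t \<le> K2)"
proof -
  obtain M where M: "\<forall>z\<in>{Rm<..}. \<bar>q z\<bar> \<le> M" using assms(5) unfolding H2_def by blast
  have M0: "0 \<le> M" using M assms(2) by force
  obtain \<delta> zs where d0: "\<delta> > 0" and zs0: "zs \<ge> 0" and qd: "\<And>z. z \<ge> zs \<Longrightarrow> q z \<le> - \<delta>"
    using H8 by blast
  define K where "K = \<mu> * zs + 1"
  have "K > 0" unfolding K_def using assms(3) zs0 by (simp add: add_nonneg_pos)
  then obtain L0 where L0: "\<forall>(\<phi>,\<psi>)\<in>Uplus h. (\<forall>s\<in>{-h..0}. L0 \<le> \<phi> s) \<longrightarrow> K \<le> j \<phi> \<psi>"
    using H9 by blast
  define L where "L = max L0 1"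
  define A where "A = L * exp (M * h)"
  define T where "T = zs + 1"
  define K2 where "K2 = A * exp (M * T)"
  have A0: "A > 0" unfolding A_def L_def by simp
  have T0: "T > 0" unfolding T_def using zs0 by simp
  have AK2: "A \<le> K2" unfolding K2_def using A0 M0 T0 by simp
  show ?thesis
  proof (intro exI[of _ K2] ballI allI impI, clarify)
    fix \<phi> \<psi> w v
    assume sol: "is_solution h Rm q j \<mu> \<phi> \<psi> w v"
      and XP: "\<forall>t\<ge>0. (seg h w t, seg h v t) \<in> Xplus h Rm q j \<mu>"
    have dw: "\<And>t. t > 0 \<Longrightarrow> (w has_real_derivative q (v t) * w t) (at t)"
      and dv: "\<And>t. t > 0 \<Longrightarrow> (v has_real_derivative j (seg h w t) (seg h v t) - \<mu> * v t) (at t)"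
      using sol unfolding is_solution_def by auto
    obtain w' where "\<forall>t\<ge>-h. (w has_real_derivative w' t) (at t within {-h..})"
      using sol unfolding is_solution_def by blast
    then have cw0: "continuous_on {-h..} w" by (intro DERIV_continuous_on) auto
    obtain v' where "\<forall>t\<ge>-h. (v has_real_derivative v' t) (at t within {-h..})"
      using sol unfolding is_solution_def by blast
    then have cv0: "continuous_on {-h..} v" by (intro DERIV_continuous_on) auto
    have cw: "continuous_on {a..b} w" if "0 \<le> a" for a b
      using that assms(1) by (intro continuous_on_subset[OF cw0]) auto
    have cv: "continuous_on {a..b} v" if "0 \<le> a" for a b
      using that assms(1) by (intro continuous_on_subset[OF cv0]) auto
    have up: "(seg h w t, seg h v t) \<in> Uplus h" if "t \<ge> 0" for t
      using XP that unfolding Xplus_def by auto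
    have wv0: "0 \<le> w t \<and> 0 \<le> v t" if "t \<ge> 0" for t
    proof -
      have "0 \<in> {-h..0}" using assms(1) by simp
      then have "0 \<le> seg h w t 0 \<and> 0 \<le> seg h v t 0" using up[OF that] unfolding Uplus_def by auto
      then show ?thesis unfolding seg_def using assms(1) by simp
    qed
    have qM: "q (v t) \<le> M" if "t \<ge> 0" for t
    proof -
      have "v t \<in> {Rm<..}" using wv0[OF that] assms(2) by simp
      then have "\<bar>q (v t)\<bar> \<le> M" using M by blast
      then show ?thesis by simp
    qed
    have growth: "w b \<le> w a * exp (M * (b - a))" if "0 < a" "a \<le> b" for a b
      by (rule exp_growth[where g="\<lambda>t. q (v t)", OF that(2) cw]) (use that dw qM wv0 in auto)
    have window: "L \<le> w r'" if "r > h" "A \<le> w r" "r - h \<le> r'" "r' \<le> r" for r r'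
    proof -
      have "A \<le> w r' * exp (M * (r - r'))" using growth[of r' r] that assms(1) by auto
      also have "\<dots> \<le> w r' * exp (M * h)"
        using wv0[of r'] that assms(1) M0 by (intro mult_left_mono) (auto intro: mult_left_mono)
      finally show ?thesis unfolding A_def by simp
    qed
    have jK: "K \<le> j (seg h w r) (seg h v r)" if "r > h" "A \<le> w r" for r
    proof -
      have "\<forall>s\<in>{-h..0}. L0 \<le> seg h w r s"
      proof
        fix s assume s: "s \<in> {-h..0}"
        have "L \<le> w (r + s)" using window[OF that, of "r+s"] s by auto
        then show "L0 \<le> seg h w r s" using s unfolding seg_def L_def by auto
      qed
      then show ?thesis using L0 up[of r] that assms(1) by auto
    qed
    have vup: "1 \<le> j (seg h w r) (seg h v r) - \<mu> * v r" if "r > h" "A \<le> w r" "v r < zs" for r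
    proof -
      have "\<mu> * v r \<le> \<mu> * zs" using that assms(3) by (simp add: mult_left_mono)
      then show ?thesis using jK[OF that(1,2)] unfolding K_def by linarith
    qed
    have core: "\<exists>t1. a \<le> t1 \<and> t1 \<le> a + T \<and> (\<forall>t. t1 \<le> t \<and> t \<le> b \<longrightarrow> zs \<le> v t)"
      if "h \<le> a" "a + T \<le> b" "\<And>r. a < r \<Longrightarrow> r \<le> b \<Longrightarrow> A \<le> w r" for a b
    proof -
      have a0: "0 < a" using that assms(1) by simp
      have "\<exists>t1. a \<le> t1 \<and> t1 \<le> a + T \<and> zs \<le> v t1"
      proof (rule ccontr)
        assume "\<nexists>t1. a \<le> t1 \<and> t1 \<le> a + T \<and> zs \<le> v t1"
        then have lt: "\<And>t. a \<le> t \<Longrightarrow> t \<le> a + T \<Longrightarrow> v t < zs" by force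
        have "v a + 1 * ((a + T) - a) \<le> v (a + T)"
          apply (rule lin_lower[OF _ cv dv])
          using T0 a0 apply auto[3]
          using vup that lt by auto
        then show False using lt[of "a+T"] wv0[of a] T0 a0 unfolding T_def by auto
      qed
      then obtain t1 where t1: "a \<le> t1" "t1 \<le> a + T" "zs \<le> v t1" by blast
      have "zs \<le> v t" if "t1 \<le> t" "t \<le> b" for t
        apply (rule persist[OF that(1) cv dv])
        using t1 a0 apply auto[3]
      proof -
        fix r assume r: "t1 < r" "r < t" "v r < zs"
        have "A \<le> w r" using \<open>\<And>r. a < r \<Longrightarrow> r \<le> b \<Longrightarrow> A \<le> w r\<close>[of r] r that t1 by simp
        then have "1 \<le> j (seg h w r) (seg h v r) - \<mu> * v r"
          using vup[of r] r t1 \<open>h \<le> a\<close> by simp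
        then show "0 < j (seg h w r) (seg h v r) - \<mu> * v r" by simp
      qed
      with t1 show ?thesis by blast
    qed
    have "\<exists>s>h. w s < A"
    proof (rule ccontr)
      assume "\<not> (\<exists>s>h. w s < A)"
      then have ge: "\<And>s. s > h \<Longrightarrow> A \<le> w s" by force
      define P where "P = h + T"
      have vz: "zs \<le> v t" if tP: "t \<ge> P" for t
      proof -
        obtain t1 where "h \<le> t1" "t1 \<le> h + T" "\<forall>t'. t1 \<le> t' \<and> t' \<le> t \<longrightarrow> zs \<le> v t'"
          using core[of h t] ge tP unfolding P_def by auto
        then show ?thesis using tP unfolding P_def by auto
      qed
      define b where "b = P + w P / (\<delta> * A) + 1"
      have P0: "P > 0" unfolding P_def using assms(1) T0 by simp
      have wP: "w P \<ge> 0" using wv0 P0 by simp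
      have Pb: "P \<le> b" unfolding b_def using wP d0 A0 by simp
      have "w b \<le> w P + (- \<delta> * A) * (b - P)"
      proof (rule lin_upper[OF Pb cw dw])
        fix t assume t: "P < t" "t < b"
        have "q (v t) \<le> - \<delta>" using qd vz t by simp
        moreover have "A \<le> w t" using ge t P_def T0 by simp
        ultimately have "q (v t) * w t \<le> - \<delta> * w t" using wv0[of t] t P0
          by (intro mult_right_mono) auto
        also have "\<dots> \<le> - \<delta> * A" using \<open>A \<le> w t\<close> d0 by simp
        finally show "q (v t) * w t \<le> - \<delta> * A" .
      qed (use P0 in auto)
      also have "\<dots> = - \<delta> * A" unfolding b_def using d0 A0 by (simp add: field_simps)
      finally have "w b < 0" using mult_pos_pos[OF d0 A0] by linarith
      then show False using wv0[of b] Pb P0 by simp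
    qed
    then obtain s where s: "s > h" "w s < A" by blast
    have "w t \<le> K2" if ts: "t \<ge> s" for t
    proof (cases "w t \<le> A")
      case True then show ?thesis using AK2 by simp
    next
      case False
      then obtain a where a: "s \<le> a" "a < t" "w a \<le> A" "\<And>r. a < r \<Longrightarrow> r \<le> t \<Longrightarrow> A < w r"
        using last_below[OF ts cw, of A] s assms(1) False by force
      have a0: "0 < a" using a s assms(1) by simp
      have bnd: "w r \<le> K2" if "a \<le> r" "r \<le> a + T" for r
      proof -
        have "w r \<le> w a * exp (M * (r - a))" using growth[OF a0 that(1)] .
        also have "\<dots> \<le> A * exp (M * T)"
          using a(3) wv0[of a] a0 that M0 by (intro mult_mono) (auto intro: mult_left_mono)
        finally show ?thesis unfolding K2_def .
      qed
      show ?thesis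
      proof (cases "t \<le> a + T")
        case True then show ?thesis using bnd a by simp
      next
        case False
        obtain t1 where t1: "a \<le> t1" "t1 \<le> a + T" "\<forall>t'. t1 \<le> t' \<and> t' \<le> t \<longrightarrow> zs \<le> v t'"
          using core[of a t] a s False by force
        have "w t \<le> w t1 + 0 * (t - t1)"
        proof (rule lin_upper[OF _ cw dw])
          fix r assume r: "t1 < r" "r < t"
          have "q (v r) \<le> - \<delta>" using qd t1 r by simp
          then show "q (v r) * w r \<le> 0" using wv0[of r] r t1 a0 d0
            by (simp add: mult_nonpos_nonneg)
        qed (use t1 False a0 in auto)
        then show ?thesis using bnd[OF t1(1,2)] by simp
      qed
    qed
    then show "\<exists>tm. \<forall>t\<ge>tm. w t \<le> K2" by blast
  qed
qed

end
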